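(* Let $(X,d,f)$ be a topological dynamical system ($(X,d)$ compact metric, $f:X\to X$ continuous), let $m$ be an ergodic $f$-invariant Borel probability measure, let $\xi$ be a finite measurable partition of $X$, let $\gamma\in(0,1)$ and $k\in\mathbb N$. For $n\in\mathbb N$ let \[ \Lambda^n(m)=\Big\{x\in X:\ f^q(x)\in\xi(x)\text{ for some }q\in[n,(1+\gamma)n]\cap\mathbb N,\ \text{and } D(\mathscr E_l(x),m)<\tfrac1k\text{ for all }l\ge n\Big\}, \] where $\xi(x)$ is the element of $\xi$ containing $x$. Then $\lim_{n\to\infty}m(\Lambda^n(m))=1$.
   Context: $\mathscr E_l(x)=\frac1l\sum_{i=0}^{l-1}\delta_{f^ix}$. Fix a dense sequence $\{\varphi_i\}_{i\ge1}$ in $C(X)$ and let $D(\mu,\nu)=\sum_{i\ge1}\frac{|\int\varphi_id\mu-\int\varphi_id\nu|}{2^{i+1}\|\varphi_i\|}$ on Borel probability measures. *)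

theory Defs
  imports "HOL-Probability.Probability"
begin

definition sup_norm :: "('a \<Rightarrow> real) \<Rightarrow> real" where
  "sup_norm g = (SUP x. \<bar>g x\<bar>)"

text \<open>The metric D on Borel probability measures, relative to the sequence phi
  (indexed from 0 here; phi 0 plays the role of phi_1, weight 2^(i+2) = 2^((i+1)+1)).\<close>
definition Dmet :: "(nat \<Rightarrow> 'a \<Rightarrow> real) \<Rightarrow> 'a measure \<Rightarrow> 'a measure \<Rightarrow> real" where
  "Dmet \<phi> \<mu> \<nu> = (\<Sum>i. \<bar>(\<integral>x. \<phi> i x \<partial>\<mu>) - (\<integral>x. \<phi> i x \<partial>\<nu>)\<bar>
                        / (2 ^ (i + 2) * sup_norm (\<phi> i)))"

text \<open>Empirical measure E_l(x) = (1/l) sum_{i<l} delta_{f^i x}.\<close>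
definition empirical :: "('a \<Rightarrow> 'a) \<Rightarrow> nat \<Rightarrow> 'a \<Rightarrow> 'a measure" where
  "empirical f l x = measure_pmf (pmf_of_multiset (image_mset (\<lambda>i. (f ^^ i) x) (mset_set {..<l})))"

definition invariant_measure :: "('a \<Rightarrow> 'a) \<Rightarrow> 'a measure \<Rightarrow> bool" where
  "invariant_measure f m \<longleftrightarrow> f \<in> measurable m m \<and> distr m m f = m"

definition ergodic_measure :: "('a \<Rightarrow> 'a) \<Rightarrow> 'a measure \<Rightarrow> bool" where
  "ergodic_measure f m \<longleftrightarrow> invariant_measure f m \<and>
     (\<forall>A \<in> sets m. f -` A = A \<longrightarrow> measure m A = 0 \<or> measure m A = 1)"

definition finite_measurable_partition :: "'a::topological_space set set \<Rightarrow> bool" where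
  "finite_measurable_partition P \<longleftrightarrow> finite P \<and> P \<subseteq> sets borel \<and> \<Union>P = UNIV \<and>
     (\<forall>A\<in>P. \<forall>B\<in>P. A \<noteq> B \<longrightarrow> A \<inter> B = {})"

definition Lambda_set :: "(nat \<Rightarrow> 'a \<Rightarrow> real) \<Rightarrow> ('a \<Rightarrow> 'a) \<Rightarrow> 'a set set \<Rightarrow> real \<Rightarrow> nat
     \<Rightarrow> 'a measure \<Rightarrow> nat \<Rightarrow> 'a set" where
  "Lambda_set \<phi> f P \<gamma> k m n = {x.
     (\<exists>q::nat. n \<le> q \<and> real q \<le> (1 + \<gamma>) * real n \<and> (\<exists>A\<in>P. x \<in> A \<and> (f ^^ q) x \<in> A)) \<and>
     (\<forall>l\<ge>n. Dmet \<phi> (empirical f l x) m < 1 / real k)}"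

end

theory Submission
  imports Defs
begin


lemma sum_split_shift: "(\<Sum>i<n+k. (a::nat\<Rightarrow>real) i) = (\<Sum>i<n. a i) + (\<Sum>i<k. a (n+i))"
  by (induction k) (auto simp: add.assoc)

lemma tiling:
  fixes a :: "nat \<Rightarrow> real"
  assumes C: "\<And>i. \<bar>a i\<bar> \<le> C" "\<bar>t\<bar> \<le> C"
   and blk: "\<And>j. \<exists>n. 1 \<le> n \<and> n \<le> M \<and> real n * t \<le> (\<Sum>i<n. a (j+i))"
  shows "real L * t - 2 * real M * C \<le> (\<Sum>i<L. a (j+i))"
proof (induction L arbitrary: j rule: less_induct)
  case (less L)
  obtain n where n: "1 \<le> n" "n \<le> M" "real n * t \<le> (\<Sum>i<n. a (j+i))" using blk by blast
  show ?case
  proof (cases "n \<le> L")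
    case True
    have IH: "real (L-n) * t - 2*M*C \<le> (\<Sum>i<L-n. a ((j+n)+i))" using less[of "L-n" "j+n"] n True by auto
    have sp: "(\<Sum>i<L. a (j+i)) = (\<Sum>i<n. a (j+i)) + (\<Sum>i<L-n. a ((j+n)+i))"
      using sum_split_shift[of "\<lambda>i. a (j+i)" n "L-n"] True by (simp add: add.assoc)
    have "real L * t = real n * t + real (L-n) * t" using True by (simp add: of_nat_diff algebra_simps)
    then show ?thesis using IH sp n by linarith
  next
    case False
    have C0: "0 \<le> C" using C(2) by linarith
    have "(\<Sum>i<L. - C) \<le> (\<Sum>i<L. a (j+i))" by (rule sum_mono) (use C(1) in \<open>smt (verit) abs_le_D2\<close>)
    hence s: "- (real L * C) \<le> (\<Sum>i<L. a (j+i))" by simp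
    have "real L * t \<le> real L * C" using C(2) by (intro mult_left_mono) auto
    moreover have "real L * C \<le> real M * C" using False n(2) C0 by (intro mult_right_mono) auto
    ultimately show ?thesis using s by linarith
  qed
qed




definition Ssum :: "('a\<Rightarrow>'a) \<Rightarrow> ('a \<Rightarrow> real) \<Rightarrow> nat \<Rightarrow> 'a \<Rightarrow> real" where
  "Ssum f g n x = (\<Sum>i<n. g ((f^^i) x))"

lemma Ssum_Suc: "Ssum f g (Suc n) x = g x + Ssum f g n (f x)"
  unfolding Ssum_def sum.lessThan_Suc_shift by (simp add: funpow_Suc_right del: funpow.simps)

locale erg = prob_space m for m :: "'a measure" +
  fixes f :: "'a \<Rightarrow> 'a"
  assumes fm: "f \<in> measurable m m" and fd: "distr m m f = m" and spU: "space m = UNIV"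
  and ergA: "\<And>A. A \<in> sets m \<Longrightarrow> f -` A = A \<Longrightarrow> measure m A = 0 \<or> measure m A = 1"
begin

lemma fpow_meas: "(f^^i) \<in> measurable m m"
  by (induction i) (auto intro: measurable_compose[OF _ fm])

lemma int_inv: "(h::'a\<Rightarrow>real) \<in> borel_measurable m \<Longrightarrow> (\<integral>x. h ((f^^i) x) \<partial>m) = (\<integral>x. h x \<partial>m)"
proof (induction i)
  case 0 then show ?case by simp
next
  case (Suc i)
  have "(\<integral>x. h ((f^^Suc i) x) \<partial>m) = (\<integral>x. (\<lambda>y. h ((f^^i) y)) (f x) \<partial>m)"
    by (simp add: funpow_Suc_right del: funpow.simps)
  also have "\<dots> = (\<integral>y. h ((f^^i) y) \<partial>distr m m f)"
  proof -
    have "(\<lambda>y. h ((f^^i) y)) \<in> borel_measurable m" using Suc.prems by (rule measurable_compose[OF fpow_meas])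
    from integral_distr[OF fm this] show ?thesis by simp
  qed
  also have "\<dots> = (\<integral>x. h x \<partial>m)" using Suc by (simp add: fd)
  finally show ?case .
qed

lemma Ssum_meas: "g \<in> borel_measurable m \<Longrightarrow> Ssum f g n \<in> borel_measurable m"
  unfolding Ssum_def by (auto intro!: borel_measurable_sum measurable_compose[OF fpow_meas])

lemma bnd_int: "g \<in> borel_measurable m \<Longrightarrow> (\<And>x. \<bar>g x\<bar> \<le> (B::real)) \<Longrightarrow> integrable m g"
  by (rule integrable_const_bound[where B=B]) auto

lemma tile_bound:
  assumes gm: "g \<in> borel_measurable m" and gB: "\<And>x. \<bar>g x\<bar> \<le> B"
    and E: "E \<in> sets m" and CB: "B \<le> C" and Cs: "\<bar>s\<bar> \<le> C" and M1: "1 \<le> M"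
    and blk: "\<And>y. y \<in> E \<Longrightarrow> \<exists>n. 1 \<le> n \<and> n \<le> M \<and> real n * s < Ssum f g n y"
  shows "s \<le> (\<integral>x. g x \<partial>m) + 2*C*(1 - measure m E)"
proof -
  define g' where "g' y = (if y \<in> E then g y else C)" for y
  have g'm: "g' \<in> borel_measurable m" unfolding g'_def
    by (rule measurable_If_set) (use gm E in auto)
  have g'B: "\<bar>g' y\<bar> \<le> C" for y using gB[of y] CB Cs by (auto simp: g'_def)
  have g'ge: "g y \<le> g' y" for y using gB[of y] CB by (auto simp: g'_def)
  have fa: "(f^^(j+i)) x = (f^^i) ((f^^j) x)" for i j x by (metis add.commute comp_apply funpow_add)
  have tl: "real L * s - 2*real M*C \<le> Ssum f g' L x" for L x
  proof -
    have "\<exists>n. 1 \<le> n \<and> n \<le> M \<and> real n * s \<le> (\<Sum>i<n. g' ((f^^(j+i)) x))" for j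
    proof (cases "(f^^j) x \<in> E")
      case True
      then obtain n where n: "1 \<le> n" "n \<le> M" "real n * s < Ssum f g n ((f^^j) x)" using blk by blast
      have "Ssum f g n ((f^^j) x) \<le> (\<Sum>i<n. g' ((f^^(j+i)) x))"
        unfolding Ssum_def fa by (rule sum_mono) (rule g'ge)
      then show ?thesis using n by (intro exI[of _ n]) auto
    next
      case False
      then show ?thesis using M1 Cs by (intro exI[of _ 1]) (auto simp: g'_def)
    qed
    from tiling[of "\<lambda>i. g' ((f^^i) x)" C s M L 0, OF g'B Cs this]
    show ?thesis by (simp add: Ssum_def)
  qed
  have intS: "(\<integral>x. Ssum f g' L x \<partial>m) = real L * (\<integral>x. g' x \<partial>m)" for L
  proof -
    have "(\<integral>x. Ssum f g' L x \<partial>m) = (\<Sum>i<L. \<integral>x. g' ((f^^i) x) \<partial>m)"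
      unfolding Ssum_def
      by (rule Bochner_Integration.integral_sum)
         (rule bnd_int[OF measurable_compose[OF fpow_meas g'm] g'B])
    also have "\<dots> = real L * (\<integral>x. g' x \<partial>m)" using int_inv[OF g'm] by simp
    finally show ?thesis .
  qed
  have Lb: "real L * s - 2*real M*C \<le> real L * (\<integral>x. g' x \<partial>m)" for L
  proof -
    have "(\<integral>x. real L * s - 2*real M*C \<partial>m) \<le> (\<integral>x. Ssum f g' L x \<partial>m)"
    proof (rule integral_mono)
      show "integrable m (Ssum f g' L)" unfolding Ssum_def
        by (intro Bochner_Integration.integrable_sum bnd_int[OF measurable_compose[OF fpow_meas g'm] g'B])
    qed (use tl in auto)
    then show ?thesis using intS[of L] by (simp add: prob_space)
  qed
  have s1: "s \<le> (\<integral>x. g' x \<partial>m)"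
  proof (rule ccontr)
    assume "\<not> ?thesis"
    then have d: "0 < s - (\<integral>x. g' x \<partial>m)" by simp
    obtain L::nat where L: "2*real M*C / (s - (\<integral>x. g' x \<partial>m)) < real L" using reals_Archimedean2 by blast
    then have "2*real M*C < real L * (s - (\<integral>x. g' x \<partial>m))" using d by (simp add: field_simps)
    then show False using Lb[of L] by (simp add: algebra_simps)
  qed
  have C0: "0 \<le> C" using Cs by linarith
  have ie: "integrable m (indicator (space m - E) :: 'a \<Rightarrow> real)" using E by (intro integrable_real_indicator) (auto simp: emeasure_eq_measure)
  have "(\<integral>x. g' x \<partial>m) \<le> (\<integral>x. g x + 2*C * indicator (space m - E) x \<partial>m)"
  proof (rule integral_mono)
    show "integrable m g'" by (rule bnd_int[OF g'm g'B])
    show "integrable m (\<lambda>x. g x + 2*C * indicator (space m - E) x)"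
      using bnd_int[OF gm gB] ie by auto
    fix x show "g' x \<le> g x + 2*C * indicator (space m - E) x"
      using gB[of x] CB by (auto simp: g'_def spU indicator_def)
  qed
  also have "\<dots> = (\<integral>x. g x \<partial>m) + 2*C*(1 - measure m E)"
    using bnd_int[OF gm gB] ie E by (simp add: prob_compl Int_absorb2)
  finally show ?thesis using s1 by linarith
qed

lemma U_zero:
  assumes gm: "g \<in> borel_measurable m" and gB: "\<And>x. \<bar>g x\<bar> \<le> B" and sI: "(\<integral>x. g x \<partial>m) < s"
  shows "measure m {x. \<exists>j::nat. \<forall>N::nat. \<exists>n\<ge>N. real n * (s + 1/(real j+1)) < Ssum f g n x} = 0"
proof -
  define U where "U = {x. \<exists>j::nat. \<forall>N::nat. \<exists>n\<ge>N. real n * (s + 1/(real j+1)) < Ssum f g n x}"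
  have key: "\<exists>K::nat. \<forall>m'\<ge>K. \<bar>s\<bar> + 1 + B < real m' * \<delta> / 2" if "\<delta> > 0" for \<delta>::real
  proof -
    obtain K::nat where "2*(\<bar>s\<bar>+1+B)/\<delta> < K" using reals_Archimedean2 by blast
    then have K: "2*(\<bar>s\<bar>+1+B) < K*\<delta>" using that by (simp add: field_simps)
    have "\<bar>s\<bar> + 1 + B < real m' * \<delta> / 2" if "m' \<ge> K" for m'
    proof -
      have "real K * \<delta> \<le> real m' * \<delta>" using that \<open>\<delta>>0\<close> by (intro mult_right_mono) auto
      then show ?thesis using K by (smt (verit) field_sum_of_halves)
    qed
    then show ?thesis by blast
  qed
  have inv: "f -` U = U"
  proof (intro set_eqI iffI)
    fix x assume "x \<in> f -` U"
    then obtain j where hj: "\<forall>N. \<exists>n\<ge>N. real n * (s + 1/(real j+1)) < Ssum f g n (f x)" by (auto simp: U_def)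
    define \<delta> where "\<delta> = 1/(real j+1)"
    have \<delta>: "0 < \<delta>" "\<delta> \<le> 1" by (auto simp: \<delta>_def field_simps)
    obtain K where K: "\<forall>m'\<ge>K. \<bar>s\<bar>+1+B < real m' * \<delta>/2" using key \<delta> by blast
    have e: "1/(real (2*j+1)+1) = \<delta>/2" by (simp add: \<delta>_def field_simps)
    have "\<forall>N. \<exists>n\<ge>N. real n * (s + 1/(real (2*j+1)+1)) < Ssum f g n x"
    proof
      fix N
      obtain m' where m': "m' \<ge> max N K" "real m' * (s+\<delta>) < Ssum f g m' (f x)" using hj \<delta>_def by blast
      have p: "\<bar>s\<bar>+1+B < real m' * \<delta>/2" using K m'(1) by auto
      have "real (Suc m') * (s + \<delta>/2) < Ssum f g (Suc m') x"
      proof -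
        have "Ssum f g (Suc m') x = g x + Ssum f g m' (f x)" by (rule Ssum_Suc)
        moreover have "\<bar>g x\<bar> \<le> B" by (rule gB)
        moreover have "real (Suc m') * (s+\<delta>/2) = real m' * s + real m' * \<delta>/2 + s + \<delta>/2" by (simp add: algebra_simps)
        moreover have "real m' * (s+\<delta>) = real m' * s + real m' * \<delta>" by (simp add: algebra_simps)
        ultimately show ?thesis using m'(2) p \<delta> abs_ge_self[of s] abs_ge_minus_self[of "g x"] by linarith
      qed
      then show "\<exists>n\<ge>N. real n * (s + 1/(real (2*j+1)+1)) < Ssum f g n x"
        unfolding e using m'(1) by (intro exI[of _ "Suc m'"]) simp
    qed
    then show "x \<in> U" unfolding U_def by blast
  next
    fix x assume "x \<in> U"
    then obtain j where hj: "\<forall>N. \<exists>n\<ge>N. real n * (s + 1/(real j+1)) < Ssum f g n x" by (auto simp: U_def)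
    define \<delta> where "\<delta> = 1/(real j+1)"
    have \<delta>: "0 < \<delta>" "\<delta> \<le> 1" by (auto simp: \<delta>_def field_simps)
    obtain K where K: "\<forall>m'\<ge>K. \<bar>s\<bar>+1+B < real m' * \<delta>/2" using key \<delta> by blast
    have e: "1/(real (2*j+1)+1) = \<delta>/2" by (simp add: \<delta>_def field_simps)
    have "\<forall>N. \<exists>n\<ge>N. real n * (s + 1/(real (2*j+1)+1)) < Ssum f g n (f x)"
    proof
      fix N
      obtain n where n: "n \<ge> Suc (max N K)" "real n * (s+\<delta>) < Ssum f g n x" using hj \<delta>_def by blast
      then obtain m' where nm: "n = Suc m'" by (cases n) auto
      have m'1: "m' \<ge> max N K" using n(1) nm by auto
      have p: "\<bar>s\<bar>+1+B < real m' * \<delta>/2" using K m'1 by auto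
      have "real m' * (s + \<delta>/2) < Ssum f g m' (f x)"
      proof -
        have "Ssum f g (Suc m') x = g x + Ssum f g m' (f x)" by (rule Ssum_Suc)
        moreover have "\<bar>g x\<bar> \<le> B" by (rule gB)
        moreover have "real (Suc m') * (s+\<delta>) = real m' * s + real m' * \<delta> + s + \<delta>" by (simp add: algebra_simps)
        moreover have "real m' * (s+\<delta>/2) = real m' * s + real m' * \<delta>/2" by (simp add: algebra_simps)
        ultimately show ?thesis using n(2) nm p \<delta> abs_ge_minus_self[of s] abs_ge_self[of "g x"] by simp
      qed
      then show "\<exists>n\<ge>N. real n * (s + 1/(real (2*j+1)+1)) < Ssum f g n (f x)"
        unfolding e using m'1 by (intro exI[of _ m']) simp
    qed
    then show "x \<in> f -` U" unfolding U_def by blast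
  qed
  have Sm: "\<And>n. Ssum f g n \<in> borel_measurable m" by (rule Ssum_meas[OF gm])
  have Um: "U \<in> sets m"
  proof -
    have "Measurable.pred m (\<lambda>x. \<exists>j::nat. \<forall>N::nat. \<exists>n\<ge>N. real n * (s + 1/(real j+1)) < Ssum f g n x)"
      using Sm by measurable
    then show ?thesis unfolding U_def pred_def by (simp add: spU)
  qed
  have "measure m U \<noteq> 1"
  proof
    assume U1: "measure m U = 1"
    define C where "C = max B \<bar>s\<bar>"
    define E where "E M = {x. \<exists>n. 1 \<le> n \<and> n \<le> M \<and> real n * s < Ssum f g n x}" for M
    have Em: "E M \<in> sets m" for M
    proof -
      have "Measurable.pred m (\<lambda>x. \<exists>n. 1 \<le> n \<and> n \<le> M \<and> real n * s < Ssum f g n x)"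
        using Sm by measurable
      then show ?thesis unfolding E_def pred_def by (simp add: spU)
    qed
    have inc: "incseq E" unfolding incseq_def E_def by fastforce
    have UE: "U \<subseteq> (\<Union>M. E M)"
    proof
      fix x assume "x \<in> U"
      then obtain j where "\<forall>N. \<exists>n\<ge>N. real n * (s + 1/(real j+1)) < Ssum f g n x" by (auto simp: U_def)
      then obtain n where n: "n \<ge> 1" "real n * (s + 1/(real j+1)) < Ssum f g n x" by blast
      have "real n * s \<le> real n * (s + 1/(real j+1))" by (intro mult_left_mono) auto
      then have "real n * s < Ssum f g n x" using n by linarith
      then have "x \<in> E n" using n unfolding E_def by (auto intro!: exI[of _ n])
      then show "x \<in> (\<Union>M. E M)" by blast
    qed
    have "measure m (\<Union>M. E M) = 1"
    proof -
      have "measure m U \<le> measure m (\<Union>M. E M)" using UE Em by (intro finite_measure_mono) auto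
      then show ?thesis using U1 prob_le_1[of "\<Union>M. E M"] by linarith
    qed
    then have lim: "(\<lambda>M. measure m (E M)) \<longlonglongrightarrow> 1"
      using finite_Lim_measure_incseq[OF _ inc] Em by auto
    have bd: "s \<le> (\<integral>x. g x \<partial>m) + 2*C*(1 - measure m (E M))" if "M \<ge> 1" for M
      by (rule tile_bound[OF gm gB Em _ _ that]) (auto simp: C_def E_def)
    have "(\<lambda>M. (\<integral>x. g x \<partial>m) + 2*C*(1 - measure m (E M))) \<longlonglongrightarrow> (\<integral>x. g x \<partial>m) + 2*C*(1 - 1)"
      by (intro tendsto_intros lim)
    then have "s \<le> (\<integral>x. g x \<partial>m)" using bd by (intro LIMSEQ_le_const) auto
    then show False using sI by simp
  qed
  then show ?thesis using ergA[OF Um inv] unfolding U_def by auto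
qed

end


context erg begin

lemma upper_AE:
  assumes gm: "g \<in> borel_measurable m" and gB: "\<And>x. \<bar>g x\<bar> \<le> B" and tI: "(\<integral>x. g x \<partial>m) < t"
  shows "AE x in m. \<exists>N. \<forall>n\<ge>N. Ssum f g n x \<le> real n * t"
proof -
  define s where "s = ((\<integral>x. g x \<partial>m) + t)/2"
  have sI: "(\<integral>x. g x \<partial>m) < s" "s < t" using tI by (auto simp: s_def)
  define U where "U = {x. \<exists>j::nat. \<forall>N::nat. \<exists>n\<ge>N. real n * (s + 1/(real j+1)) < Ssum f g n x}"
  have Um: "U \<in> sets m"
  proof -
    have "Measurable.pred m (\<lambda>x. \<exists>j::nat. \<forall>N::nat. \<exists>n\<ge>N. real n * (s + 1/(real j+1)) < Ssum f g n x)"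
      using Ssum_meas[OF gm] by measurable
    then show ?thesis unfolding U_def pred_def by (simp add: spU)
  qed
  have "U \<in> null_sets m" using U_zero[OF gm gB sI(1)] Um unfolding U_def
    by (intro null_setsI) (auto simp: emeasure_eq_measure)
  from AE_not_in[OF this] show ?thesis
  proof (rule AE_mp, intro AE_I2 impI)
    fix x assume "x \<notin> U"
    have ts: "0 < t - s" using sI(2) by simp
    obtain j where j: "inverse (real (Suc j)) < t - s" using reals_Archimedean[OF ts] by blast
    have jj: "1/(real j+1) < t - s" using j by (simp add: inverse_eq_divide add.commute)
    from \<open>x \<notin> U\<close> have "\<not> (\<forall>N::nat. \<exists>n\<ge>N. real n * (s + 1/(real j+1)) < Ssum f g n x)"
      unfolding U_def by blast
    then obtain N where N: "\<forall>n\<ge>N. Ssum f g n x \<le> real n * (s + 1/(real j+1))"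
      by (auto simp: not_less)
    have le: "real n * (s + 1/(real j+1)) \<le> real n * t" for n
    proof (rule mult_left_mono)
      show "s + 1/(real j+1) \<le> t" using jj by linarith
    qed simp
    show "\<exists>N. \<forall>n\<ge>N. Ssum f g n x \<le> real n * t"
    proof (intro exI allI impI)
      fix n assume "N \<le> n"
      then show "Ssum f g n x \<le> real n * t" using N le[of n] by force
    qed
  qed
qed

lemma birkhoff:
  assumes gm: "g \<in> borel_measurable m" and gB: "\<And>x. \<bar>g x\<bar> \<le> B"
  shows "AE x in m. (\<lambda>n. Ssum f g n x / real n) \<longlonglongrightarrow> (\<integral>x. g x \<partial>m)"
proof -
  define I where "I = (\<integral>x. g x \<partial>m)"
  have up: "AE x in m. \<forall>j::nat. \<exists>N. \<forall>n\<ge>N. Ssum f g n x \<le> real n * (I + 1/(real j+1))"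
    unfolding AE_all_countable by (intro allI upper_AE[OF gm gB]) (auto simp: I_def)
  have gm': "(\<lambda>x. - g x) \<in> borel_measurable m" using gm by measurable
  have lo: "AE x in m. \<forall>j::nat. \<exists>N. \<forall>n\<ge>N. Ssum f (\<lambda>x. - g x) n x \<le> real n * (- I + 1/(real j+1))"
    unfolding AE_all_countable by (intro allI upper_AE[OF gm', of B]) (use gB in \<open>auto simp: I_def\<close>)
  have neg: "Ssum f (\<lambda>x. - g x) n x = - Ssum f g n x" for n x by (simp add: Ssum_def sum_negf)
  show ?thesis unfolding I_def[symmetric]
  proof (rule AE_mp[OF AE_conjI[OF up lo]], intro AE_I2 impI)
    fix x assume H: "(\<forall>j::nat. \<exists>N. \<forall>n\<ge>N. Ssum f g n x \<le> real n * (I + 1/(real j+1))) \<and>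
      (\<forall>j::nat. \<exists>N. \<forall>n\<ge>N. Ssum f (\<lambda>x. - g x) n x \<le> real n * (- I + 1/(real j+1)))"
    show "(\<lambda>n. Ssum f g n x / real n) \<longlonglongrightarrow> I"
    proof (rule LIMSEQ_I)
      fix r :: real assume "0 < r"
      obtain j where j: "inverse (real (Suc j)) < r" using reals_Archimedean \<open>0<r\<close> by blast
      obtain N1 where N1: "\<forall>n\<ge>N1. Ssum f g n x \<le> real n * (I + 1/(real j+1))" using H by blast
      obtain N2 where N2: "\<forall>n\<ge>N2. Ssum f (\<lambda>x. - g x) n x \<le> real n * (- I + 1/(real j+1))" using H by blast
      have "norm (Ssum f g n x / real n - I) < r" if n: "n \<ge> max 1 (max N1 N2)" for n
      proof -
        have np: "0 < real n" using n by auto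
        have a0: "Ssum f g n x \<le> real n * (I + 1/(real j+1))" using N1 n by force
        have a: "Ssum f g n x / real n \<le> I + 1/(real j+1)" using a0 np by (simp add: pos_divide_le_eq mult.commute)
        have b0: "- Ssum f g n x \<le> real n * (- I + 1/(real j+1))" using N2 n neg[of n x] by force
        have b: "- (Ssum f g n x / real n) \<le> - I + 1/(real j+1)" 
        proof -
          have "(- Ssum f g n x) / real n \<le> - I + 1/(real j+1)"
            by (subst pos_divide_le_eq[OF np]) (metis b0 mult.commute)
          then show ?thesis by simp
        qed
        have "1/(real j+1) < r" using j by (simp add: inverse_eq_divide add.commute)
        moreover have "\<bar>Ssum f g n x / real n - I\<bar> \<le> 1/(real j+1)" unfolding abs_le_iff using a b by linarith
        ultimately show ?thesis by simp
      qed
      then show "\<exists>no. \<forall>n\<ge>no. norm (Ssum f g n x / real n - I) < r" by blast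
    qed
  qed
qed

end



lemma emp_int:
  fixes h :: "'a \<Rightarrow> real"
  assumes "0 < l"
  shows "(\<integral>y. h y \<partial>empirical f l x) = Ssum f h l x / real l"
proof -
  have ne: "{..<l} \<noteq> {}" using assms by auto
  have "empirical f l x = measure_pmf (map_pmf (\<lambda>i. (f^^i) x) (pmf_of_set {..<l}))"
    unfolding empirical_def using map_pmf_of_set[of "{..<l}" "\<lambda>i. (f^^i) x"] ne by simp
  then show ?thesis using ne by (simp add: integral_pmf_of_set Ssum_def)
qed

lemma tend_D:
  fixes \<phi> :: "nat \<Rightarrow> 'a \<Rightarrow> real"
  assumes b1: "\<And>i y. \<bar>\<phi> i y\<bar> \<le> sup_norm (\<phi> i)"
    and b2: "\<And>i. \<bar>\<integral>y. \<phi> i y \<partial>m\<bar> \<le> sup_norm (\<phi> i)"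
    and lim: "\<And>i. (\<lambda>l. Ssum f (\<phi> i) l x / real l) \<longlonglongrightarrow> (\<integral>y. \<phi> i y \<partial>m)"
  shows "(\<lambda>l. Dmet \<phi> (empirical f l x) m) \<longlonglongrightarrow> 0"
proof -
  define a where "a i l = \<bar>Ssum f (\<phi> i) l x / real l - (\<integral>y. \<phi> i y \<partial>m)\<bar> / (2^(i+2) * sup_norm (\<phi> i))" for i l
  have ev: "eventually (\<lambda>l. Dmet \<phi> (empirical f l x) m = (\<Sum>i. a i l)) sequentially"
    using eventually_ge_at_top[of 1] by eventually_elim (simp add: Dmet_def emp_int a_def)
  have la: "(\<lambda>l. a i l) \<longlonglongrightarrow> 0" for i
  proof -
    have "(\<lambda>l. \<bar>Ssum f (\<phi> i) l x / real l - (\<integral>y. \<phi> i y \<partial>m)\<bar>) \<longlonglongrightarrow> 0"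
      using tendsto_rabs_zero[OF LIM_zero[OF lim[of i]]] .
    then show ?thesis unfolding a_def by (rule tendsto_divide_zero)
  qed
  have bnd: "norm (a i l) \<le> (1/2)^i" if "1 \<le> l" for i l
  proof -
    have s0: "0 \<le> sup_norm (\<phi> i)" using b1[of i undefined] by linarith
    have "\<bar>Ssum f (\<phi> i) l x\<bar> \<le> real l * sup_norm (\<phi> i)"
    proof -
      have "\<bar>Ssum f (\<phi> i) l x\<bar> \<le> (\<Sum>j<l. \<bar>\<phi> i ((f^^j) x)\<bar>)" unfolding Ssum_def by (rule sum_abs)
      also have "\<dots> \<le> (\<Sum>j<l. sup_norm (\<phi> i))" by (rule sum_mono) (rule b1)
      finally show ?thesis by simp
    qed
    then have u: "\<bar>Ssum f (\<phi> i) l x / real l\<bar> \<le> sup_norm (\<phi> i)" using that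
      by (simp add: abs_div pos_divide_le_eq mult.commute)
    have num: "\<bar>Ssum f (\<phi> i) l x / real l - (\<integral>y. \<phi> i y \<partial>m)\<bar> \<le> 2 * sup_norm (\<phi> i)"
      using u b2[of i] by linarith
    show ?thesis
    proof (cases "sup_norm (\<phi> i) = 0")
      case True then show ?thesis by (simp add: a_def)
    next
      case False
      then have sp: "0 < sup_norm (\<phi> i)" using s0 by linarith
      have "a i l \<le> 2 * sup_norm (\<phi> i) / (2^(i+2) * sup_norm (\<phi> i))"
        unfolding a_def by (rule divide_right_mono[OF num]) (use sp in simp)
      also have "\<dots> = (1/2)^i / 2" using sp by (simp add: power_add field_simps)
      also have "\<dots> \<le> (1/2)^i" by simp
      finally have "a i l \<le> (1/2)^i" .
      moreover have "0 \<le> a i l" unfolding a_def using sp by simp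
      ultimately show ?thesis by simp
    qed
  qed
  have bnd': "eventually (\<lambda>(i,l). norm (a i l) \<le> (1/2)^i) (at_top \<times>\<^sub>F sequentially)"
  proof -
    have "eventually (\<lambda>p. True \<and> 1 \<le> snd p) (at_top \<times>\<^sub>F sequentially)"
      by (intro eventually_prodI) (auto simp: eventually_ge_at_top)
    then show ?thesis by eventually_elim (use bnd in auto)
  qed
  have "(\<lambda>l. \<Sum>i. a i l) \<longlonglongrightarrow> (\<Sum>i. (0::real))"
    using tannerys_theorem[of a "\<lambda>_. 0" sequentially "\<lambda>i. (1/2)^i", OF la bnd'] by (simp add: summable_geometric)
  then show ?thesis using tendsto_cong[OF ev] by simp
qed

lemma return_time:
  assumes lim: "(\<lambda>l. Ssum f (indicator A) l x / real l) \<longlonglongrightarrow> a" and a: "0 < a"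
    and g: "0 < \<gamma>" "\<gamma> < 1"
  shows "eventually (\<lambda>n. \<exists>q. n \<le> q \<and> real q \<le> (1+\<gamma>)*real n \<and> (f^^q) x \<in> A) sequentially"
proof -
  define S where "S l = Ssum f (indicator A) l x" for l
  define e where "e = \<gamma>*a/4"
  have e0: "0 < e" using a g by (simp add: e_def)
  obtain N where N: "\<forall>l\<ge>N. norm (S l / real l - a) < e" using LIMSEQ_D[OF lim e0] unfolding S_def by blast
  have "\<exists>q. n \<le> q \<and> real q \<le> (1+\<gamma>)*real n \<and> (f^^q) x \<in> A" if n: "n \<ge> max N 1" for n
  proof -
    define Q where "Q = nat \<lfloor>(1+\<gamma>)*real n\<rfloor>"
    have fl0: "0 \<le> \<lfloor>(1+\<gamma>)*real n\<rfloor>" using g by simp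
    have rQ: "real Q = of_int \<lfloor>(1+\<gamma>)*real n\<rfloor>" unfolding Q_def using fl0 by simp
    have hQ1: "real Q \<le> (1+\<gamma>)*real n" using rQ of_int_floor_le by simp
    have hQ2: "(1+\<gamma>)*real n < real Q + 1" using rQ real_of_int_floor_add_one_gt by simp
    have "int n \<le> \<lfloor>(1+\<gamma>)*real n\<rfloor>" using g by (subst le_floor_iff) (simp add: algebra_simps)
    then have nQ: "n \<le> Q" unfolding Q_def by linarith
    have n1: "1 \<le> n" "N \<le> n" using n by auto
    have "norm (S (Q+1) / real (Q+1) - a) < e" using N nQ n1 by (meson le_add1 order_trans)
    then have "a - e < S (Q+1) / real (Q+1)" by simp
    then have s1: "(real Q + 1) * (a - e) < S (Q+1)" by (simp add: pos_less_divide_eq mult.commute add.commute)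
    have "norm (S n / real n - a) < e" using N n1 by auto
    then have "S n / real n < a + e" by simp
    then have s2: "S n < real n * (a + e)" using n1 by (simp add: pos_divide_less_eq mult.commute)
    have ae: "0 < a - e" using a g by (simp add: e_def)
    have s3: "((1+\<gamma>)*real n) * (a - e) \<le> (real Q + 1) * (a - e)"
      using hQ2 ae by (intro mult_right_mono) auto
    have id: "((1+\<gamma>)*real n) * (a - e) - real n * (a + e) = real n * (\<gamma>*a*(2-\<gamma>)/4)"
      by (simp add: e_def algebra_simps)
    have "0 \<le> real n * (\<gamma>*a*(2-\<gamma>)/4)" using g a by (intro mult_nonneg_nonneg) auto
    then have lt: "S n < S (Q+1)" using s1 s2 s3 id by linarith
    show ?thesis
    proof (rule ccontr)
      assume H: "\<not> ?thesis"
      have z: "indicator A ((f^^(n+i)) x) = (0::real)" if "i < Q+1-n" for i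
      proof -
        have "(f^^(n+i)) x \<notin> A" using H that hQ1 nQ
        proof -
          have "n+i \<le> Q" using that nQ by linarith
          then have "real (n+i) \<le> (1+\<gamma>)*real n" using hQ1 by linarith
          then show ?thesis using H by auto
        qed
        then show ?thesis by simp
      qed
      have "S (Q+1) = S n + (\<Sum>i<Q+1-n. indicator A ((f^^(n+i)) x))"
        unfolding S_def Ssum_def using sum_split_shift[of "\<lambda>i. indicator A ((f^^i) x)" n "Q+1-n"] nQ by simp
      also have "\<dots> = S n" using z by simp
      finally show False using lt by simp
    qed
  qed
  then show ?thesis unfolding eventually_sequentially by blast
qed




theorem lemma4p5:
  fixes f :: "'a::metric_space \<Rightarrow> 'a" and m :: "'a measure"
    and P :: "'a set set" and \<gamma> :: real and k :: nat
    and \<phi> :: "nat \<Rightarrow> 'a \<Rightarrow> real"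
  assumes "compact (UNIV :: 'a set)"
    and "continuous_on UNIV f"
    and "prob_space m" and "sets m = sets borel"
    and "ergodic_measure f m"
    and "finite_measurable_partition P"
    and "0 < \<gamma>" and "\<gamma> < 1" and "0 < k"
    and "\<And>i. continuous_on UNIV (\<phi> i)"
    and "\<And>g e. continuous_on UNIV g \<Longrightarrow> 0 < e \<Longrightarrow> \<exists>i. \<forall>x. \<bar>\<phi> i x - g x\<bar> < e"
  shows "(\<lambda>n. measure m (Lambda_set \<phi> f P \<gamma> k m n)) \<longlonglongrightarrow> 1"
proof -
  have spU: "space m = UNIV" using sets_eq_imp_space_eq[OF assms(4)] by simp
  have mc: "measurable m N = measurable borel N" for N :: "'b measure"
    by (rule measurable_cong_sets) (auto simp: assms(4))
  have fm: "f \<in> measurable m m" and fd: "distr m m f = m"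
    and ergA: "\<And>A. A \<in> sets m \<Longrightarrow> f -` A = A \<Longrightarrow> measure m A = 0 \<or> measure m A = 1"
    using assms(5) unfolding ergodic_measure_def invariant_measure_def by auto
  interpret prob_space m by fact
  interpret E: erg m f
    by unfold_locales (use fm fd spU ergA in auto)
  have Pfin: "finite P" and Ps: "\<And>A. A \<in> P \<Longrightarrow> A \<in> sets m" and Pcov: "\<Union>P = UNIV"
    using assms(6) assms(4) unfolding finite_measurable_partition_def by auto
  have phim: "\<phi> i \<in> borel_measurable m" for i
    using borel_measurable_continuous_onI[OF assms(10)] measurable_cong_sets[OF assms(4) refl, of borel] by metis
  have phib: "\<exists>B. \<forall>y. \<bar>\<phi> i y\<bar> \<le> B" for i
  proof -
    have "compact (\<phi> i ` UNIV)" by (rule compact_continuous_image[OF assms(10) assms(1)])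
    then have "bounded (\<phi> i ` UNIV)" by (rule compact_imp_bounded)
    then show ?thesis unfolding bounded_real by auto
  qed
  have b1: "\<bar>\<phi> i y\<bar> \<le> sup_norm (\<phi> i)" for i y
  proof -
    obtain B where B: "\<forall>y. \<bar>\<phi> i y\<bar> \<le> B" using phib by blast
    have "bdd_above (range (\<lambda>y. \<bar>\<phi> i y\<bar>))" using B by (intro bdd_aboveI2) auto
    then show ?thesis unfolding sup_norm_def by (intro cSUP_upper) auto
  qed
  have phiint: "integrable m (\<phi> i)" for i by (rule E.bnd_int[OF phim b1])
  have b2: "\<bar>\<integral>y. \<phi> i y \<partial>m\<bar> \<le> sup_norm (\<phi> i)" for i
  proof -
    have "(\<integral>y. \<phi> i y \<partial>m) \<le> (\<integral>y. sup_norm (\<phi> i) \<partial>m)"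
      by (rule integral_mono[OF phiint]) (use b1 in \<open>auto simp: abs_le_iff\<close>)
    moreover have "(\<integral>y. - sup_norm (\<phi> i) \<partial>m) \<le> (\<integral>y. \<phi> i y \<partial>m)"
    proof (rule integral_mono[OF _ phiint])
      fix x show "- sup_norm (\<phi> i) \<le> \<phi> i x" using b1[of i x] by arith
    qed simp
    ultimately show ?thesis by (simp add: prob_space abs_le_iff)
  qed
  have AE1: "AE y in m. \<forall>i. (\<lambda>l. Ssum f (\<phi> i) l y / real l) \<longlonglongrightarrow> (\<integral>y. \<phi> i y \<partial>m)"
    unfolding AE_all_countable by (intro allI E.birkhoff[OF phim b1])
  have AE2: "AE y in m. \<forall>A\<in>P. (\<lambda>l. Ssum f (indicator A) l y / real l) \<longlonglongrightarrow> measure m A"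
  proof (rule AE_finite_allI[OF Pfin])
    fix A assume A: "A \<in> P"
    have "AE y in m. (\<lambda>l. Ssum f (indicator A) l y / real l) \<longlonglongrightarrow> (\<integral>y. indicator A y \<partial>m)"
      by (rule E.birkhoff[where B=1]) (use Ps[OF A] in auto)
    then show "AE y in m. (\<lambda>l. Ssum f (indicator A) l y / real l) \<longlonglongrightarrow> measure m A"
      using Ps[OF A] by (simp add: spU)
  qed
  have AE3: "AE y in m. \<forall>A\<in>P. measure m A = 0 \<longrightarrow> y \<notin> A"
  proof (rule AE_finite_allI[OF Pfin])
    fix A assume A: "A \<in> P"
    show "AE y in m. measure m A = 0 \<longrightarrow> y \<notin> A"
    proof (cases "measure m A = 0")
      case True
      then have "A \<in> null_sets m" using Ps[OF A] by (intro null_setsI) (auto simp: emeasure_eq_measure)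
      then show ?thesis using AE_not_in by auto
    qed simp
  qed
  define L where "L n = Lambda_set \<phi> f P \<gamma> k m n" for n
  have good: "\<exists>N. \<forall>n\<ge>N. y \<in> L n" if H1: "\<forall>i. (\<lambda>l. Ssum f (\<phi> i) l y / real l) \<longlonglongrightarrow> (\<integral>y. \<phi> i y \<partial>m)"
    and H2: "\<forall>A\<in>P. (\<lambda>l. Ssum f (indicator A) l y / real l) \<longlonglongrightarrow> measure m A"
    and H3: "\<forall>A\<in>P. measure m A = 0 \<longrightarrow> y \<notin> A" for y
  proof -
    have "(\<lambda>l. Dmet \<phi> (empirical f l y) m) \<longlonglongrightarrow> 0" by (rule tend_D[OF b1 b2 H1[rule_format]])
    moreover have "(0::real) < 1 / real k" using assms(9) by simp
    ultimately have "eventually (\<lambda>l. Dmet \<phi> (empirical f l y) m < 1 / real k) sequentially"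
      by (rule order_tendstoD(2))
    then obtain N1 where N1: "\<forall>l\<ge>N1. Dmet \<phi> (empirical f l y) m < 1 / real k"
      unfolding eventually_sequentially by blast
    obtain A where A: "A \<in> P" "y \<in> A" using Pcov by blast
    have "measure m A \<noteq> 0" using H3 A by blast
    then have pos: "0 < measure m A" using measure_nonneg[of m A] by linarith
    have "eventually (\<lambda>n. \<exists>q. n \<le> q \<and> real q \<le> (1+\<gamma>)*real n \<and> (f^^q) y \<in> A) sequentially"
      by (rule return_time[OF _ pos assms(7) assms(8)]) (use H2 A in auto)
    then obtain N2 where N2: "\<forall>n\<ge>N2. \<exists>q. n \<le> q \<and> real q \<le> (1+\<gamma>)*real n \<and> (f^^q) y \<in> A"
      unfolding eventually_sequentially by blast
    have "y \<in> L n" if n: "n \<ge> max N1 N2" for n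
    proof -
      obtain q where q: "n \<le> q" "real q \<le> (1+\<gamma>)*real n" "(f^^q) y \<in> A" using N2 n by auto
      have "\<forall>l\<ge>n. Dmet \<phi> (empirical f l y) m < 1 / real k" using N1 n by auto
      then show ?thesis unfolding L_def Lambda_set_def using q A by blast
    qed
    then show ?thesis by blast
  qed
  have AEg: "AE y in m. \<exists>N. \<forall>n\<ge>N. y \<in> L n"
    using AE1 AE2 AE3 by eventually_elim (rule good)
  have Dm: "(\<lambda>x. Dmet \<phi> (empirical f l x) m) \<in> borel_measurable m" for l
  proof (cases "l = 0")
    case True
    then have "(\<lambda>x. Dmet \<phi> (empirical f l x) m) = (\<lambda>x. Dmet \<phi> (empirical f 0 undefined) m)"
      by (simp add: empirical_def)
    then show ?thesis by simp
  next
    case False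
    then have "(\<lambda>x. Dmet \<phi> (empirical f l x) m) = (\<lambda>x. \<Sum>i. \<bar>Ssum f (\<phi> i) l x / real l - (\<integral>y. \<phi> i y \<partial>m)\<bar> / (2^(i+2) * sup_norm (\<phi> i)))"
      by (simp add: Dmet_def emp_int)
    moreover have "(\<lambda>x. \<Sum>i. \<bar>Ssum f (\<phi> i) l x / real l - (\<integral>y. \<phi> i y \<partial>m)\<bar> / (2^(i+2) * sup_norm (\<phi> i))) \<in> borel_measurable m"
      using E.Ssum_meas[OF phim] by measurable
    ultimately show ?thesis by simp
  qed
  have predA: "Measurable.pred m (\<lambda>x. \<exists>A\<in>P. x \<in> A \<and> (f^^q) x \<in> A)" for q
  proof (rule pred_intros_finite(4)[OF Pfin])
    fix A assume A: "A \<in> P"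
    have "{x \<in> space m. x \<in> A \<and> (f^^q) x \<in> A} = A \<inter> ((f^^q) -` A \<inter> space m)" by (auto simp: spU)
    also have "\<dots> \<in> sets m" using Ps[OF A] measurable_sets[OF E.fpow_meas Ps[OF A]] by auto
    finally show "Measurable.pred m (\<lambda>x. x \<in> A \<and> (f^^q) x \<in> A)" unfolding pred_def .
  qed
  have Lm: "L n \<in> sets m" for n
  proof -
    note [measurable] = predA Dm
    have "Measurable.pred m (\<lambda>x. (\<exists>q::nat. n \<le> q \<and> real q \<le> (1 + \<gamma>) * real n \<and> (\<exists>A\<in>P. x \<in> A \<and> (f ^^ q) x \<in> A)) \<and>
        (\<forall>l\<ge>n. Dmet \<phi> (empirical f l x) m < 1 / real k))" by measurable
    then show ?thesis unfolding L_def Lambda_set_def pred_def by (simp add: spU)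
  qed
  define H where "H N = (\<Inter>n\<in>{N..}. L n)" for N
  have Hm: "H N \<in> sets m" for N unfolding H_def using Lm by (intro sets.countable_INT) auto
  have Hinc: "incseq H" unfolding incseq_def H_def by auto
  have HL: "H n \<subseteq> L n" for n unfolding H_def by auto
  have "AE y in m. y \<in> (\<Union>N. H N)" using AEg by eventually_elim (auto simp: H_def)
  then have "measure m (\<Union>N. H N) = 1" using prob_eq_1[of "\<Union>N. H N"] Hm by auto
  then have limH: "(\<lambda>N. measure m (H N)) \<longlonglongrightarrow> 1"
    using finite_Lim_measure_incseq[OF _ Hinc] Hm by auto
  show ?thesis
  proof (rule tendsto_sandwich[OF _ _ limH tendsto_const])
    show "\<forall>\<^sub>F n in sequentially. measure m (H n) \<le> measure m (Lambda_set \<phi> f P \<gamma> k m n)"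
      using HL Lm Hm by (intro always_eventually allI finite_measure_mono) (auto simp: L_def)
    show "\<forall>\<^sub>F n in sequentially. measure m (Lambda_set \<phi> f P \<gamma> k m n) \<le> 1"
      by (intro always_eventually allI prob_le_1)
  qed
qed


end
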